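(* Let $m>1$ and let $\gamma$ be a permutation of $(\mathbb{F}_2)^m$ with $0\gamma=0$. Then $\mathcal{N}(\gamma)\neq0$ if and only if $\gamma$ is strongly $1$-anti-invariant.
   Context: For Boolean functions $f,g:(\mathbb{F}_2)^m\to\mathbb{F}_2$, $\mathrm{d}(f,g)=|\{x: f(x)\ne g(x)\}|$; $\mathcal{A}_m$ is the set of affine Boolean functions (algebraic degree at most $1$); the non-linearity of $f$ is $\mathcal{N}(f)=\min\{\mathrm{d}(f,\alpha):\alpha\in\mathcal{A}_m\}$. For a vectorial function $F:(\mathbb{F}_2)^m\to(\mathbb{F}_2)^m$ with coordinate functions $F_1,\dots,F_m$ and $v\ne0$, the component is ${}_vF=\sum_i v_iF_i$, and $\mathcal{N}(F)=\min\{\mathcal{N}({}_vF): v\in(\mathbb{F}_2)^m\setminus\{0\}\}$. $F$ is strongly $1$-anti-invariant if for any two subspaces $U,W$ of $(\mathbb{F}_2)^m$ with $F(U)=W$, either $\dim U=\dim W<m-1$ or $U=W=(\mathbb{F}_2)^m$. *)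

theory Defs
  imports "HOL-Analysis.Analysis" "HOL-Library.Z2"
begin

text \<open>The field F_2 is the library type bit (HOL-Library.Z2); (F_2)^m is bit^'n with
  m = CARD('n).\<close>

lemma UNIV_bit: "(UNIV :: bit set) = {0, 1}"
  by (metis (full_types) UNIV_eq_I bit_not_zero_iff insertCI)

instance bit :: finite
  by standard (simp add: UNIV_bit)

type_synonym 'n boolfun = "bit ^ 'n \<Rightarrow> bit"
type_synonym 'n vecfun = "bit ^ 'n \<Rightarrow> bit ^ 'n"

definition hdist :: "'n::finite boolfun \<Rightarrow> 'n boolfun \<Rightarrow> nat" where
  "hdist f g = card {x. f x \<noteq> g x}"

definition affine_funs :: "'n::finite boolfun set" where
  "affine_funs = {(\<lambda>x. c + (\<Sum>i\<in>UNIV. a $ i * x $ i)) | c a. True}"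

definition nonlin :: "'n::finite boolfun \<Rightarrow> nat" where
  "nonlin f = Min ((\<lambda>\<alpha>. hdist f \<alpha>) ` affine_funs)"

definition component :: "bit ^ 'n \<Rightarrow> 'n::finite vecfun \<Rightarrow> 'n boolfun" where
  "component v F = (\<lambda>x. \<Sum>i\<in>UNIV. v $ i * F x $ i)"

definition vnonlin :: "'n::finite vecfun \<Rightarrow> nat" where
  "vnonlin F = Min ((\<lambda>v. nonlin (component v F)) ` (UNIV - {0}))"

definition strongly_1_anti_invariant :: "'n::finite vecfun \<Rightarrow> bool" where
  "strongly_1_anti_invariant F \<longleftrightarrow>
     (\<forall>U W. vec.subspace U \<and> vec.subspace W \<and> F ` U = W \<longrightarrow>
        (vec.dim U = vec.dim W \<and> vec.dim W < CARD('n) - 1) \<or> (U = UNIV \<and> W = UNIV))"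

end

theory Submission imports Defs begin

lemma bit_cases2: "(x::bit) = 0 \<or> x = 1"
  by (cases x) auto

lemma bit_add_self[simp]: "(x::bit) + x = 0"
  using bit_cases2[of x] by auto

lemma bit_minus[simp]: "- (x::bit) = x"
  using bit_cases2[of x] by auto

lemma bitvec_minus[simp]: "- (x::bit^'n) = x"
  by (simp add: vec_eq_iff)

lemma bitvec_diff: "(x::bit^'n) - y = x + y"
  by (simp add: vec_eq_iff)

lemma bitvec_add_self[simp]: "(x::bit^'n) + x = 0"
  by (simp add: vec_eq_iff)

lemma vec_dimension: "vec.dim (UNIV :: (bit^'n::finite) set) = CARD('n)"
  by (simp add: card_cart_basis)

definition dotp :: "bit^'n::finite \<Rightarrow> bit^'n \<Rightarrow> bit" where
  "dotp a x = (\<Sum>i\<in>UNIV. a $ i * x $ i)"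

lemma dotp_add: "dotp a (x + y) = dotp a x + dotp a y"
  unfolding dotp_def vector_add_component distrib_left by (rule sum.distrib)
lemma dotp_scale: "dotp a (c *s x) = c * dotp a x"
  unfolding dotp_def vector_smult_component sum_distrib_left by (rule sum.cong) (auto simp only: mult.left_commute)
lemma dotp_axis: "dotp a (axis i 1) = a $ i"
proof -
  have "dotp a (axis i 1) = (\<Sum>j\<in>UNIV. if j = i then a $ i else 0)"
    unfolding dotp_def by (rule sum.cong) (auto simp: axis_def)
  also have "\<dots> = a $ i" by (subst sum.delta) auto
  finally show ?thesis .
qed
lemma dotp_zero[simp]: "dotp a 0 = 0"
  by (simp add: dotp_def)

lemma card_span_indep:
  fixes B :: "(bit^'n::finite) set"
  shows "finite B \<Longrightarrow> vec.independent B \<Longrightarrow> card (vec.span B) = 2 ^ card B"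
proof (induction B rule: finite_induct)
  case empty
  then show ?case by simp
next
  case (insert b B)
  have iB: "vec.independent B" and nb: "b \<notin> vec.span B"
    using insert.prems insert.hyps(2) by (auto simp: vec.independent_insert)
  have eq: "vec.span (insert b B) = vec.span B \<union> (\<lambda>x. x + b) ` vec.span B"
  proof
    show "vec.span (insert b B) \<subseteq> vec.span B \<union> (\<lambda>x. x + b) ` vec.span B"
    proof
      fix x assume "x \<in> vec.span (insert b B)"
      then obtain k where k: "x - k *s b \<in> vec.span B" unfolding vec.span_insert by auto
      show "x \<in> vec.span B \<union> (\<lambda>x. x + b) ` vec.span B"
      proof (cases "k = 0")
        case True then show ?thesis using k by simp
      next
        case False then have "k = 1" using bit_cases2 by blast
        then have "x + b \<in> vec.span B" using k by (simp add: bitvec_diff)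
        moreover have "x = (x + b) + b" by (simp add: add.assoc)
        ultimately show ?thesis by blast
      qed
    qed
    show "vec.span B \<union> (\<lambda>x. x + b) ` vec.span B \<subseteq> vec.span (insert b B)"
      by (auto intro: vec.span_add vec.span_base vec.span_mono[THEN subsetD, of B])
  qed
  have disj: "vec.span B \<inter> (\<lambda>x. x + b) ` vec.span B = {}"
  proof (rule ccontr)
    assume "vec.span B \<inter> (\<lambda>x. x + b) ` vec.span B \<noteq> {}"
    then obtain y where y: "y \<in> vec.span B" "y + b \<in> vec.span B" by auto
    then have "(y + b) + y \<in> vec.span B" using vec.span_add[OF y(2) y(1)] by simp
    moreover have "(y + b) + y = b" by (metis add.commute add.left_commute add_0_right bitvec_add_self)
    ultimately show False using nb by simp
  qed
  have fin: "finite (vec.span B)" by simp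
  have "card ((\<lambda>x. x + b) ` vec.span B) = card (vec.span B)"
    by (rule card_image) (auto simp: inj_on_def)
  then have "card (vec.span (insert b B)) = 2 * card (vec.span B)"
    unfolding eq using card_Un_disjoint[OF fin _ disj] fin by simp
  then show ?case using insert by (simp add: iB)
qed

lemma card_subspace:
  fixes U :: "(bit^'n::finite) set"
  assumes "vec.subspace U"
  shows "card U = 2 ^ vec.dim U"
proof -
  obtain B where B: "B \<subseteq> U" "vec.independent B" "U \<subseteq> vec.span B" "card B = vec.dim U"
    by (rule vec.basis_exists)
  have "vec.span B = U"
    using vec.span_minimal[OF B(1) assms] B(3) by blast
  moreover have "finite B" by simp
  ultimately show ?thesis using card_span_indep[of B] B(2,4) by simp
qed

lemma kernel_subspace: "vec.subspace {x. dotp a x = 0}"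
  unfolding vec.subspace_def by (auto simp: dotp_add dotp_scale)

lemma kernel_dim:
  fixes a :: "bit^'n::finite"
  assumes "a \<noteq> 0"
  shows "vec.dim {x. dotp a x = 0} = CARD('n) - 1"
proof -
  let ?K = "{x. dotp a x = 0}"
  obtain i where i: "a $ i \<noteq> 0" using assms by (auto simp: vec_eq_iff)
  then have ai: "a $ i = 1" using bit_cases2 by blast
  let ?b = "axis i (1::bit)"
  have spK: "vec.span ?K = ?K" by (rule vec.span_eq_iff[THEN iffD2, OF kernel_subspace])
  have nb: "?b \<notin> vec.span ?K" unfolding spK by (simp add: dotp_axis ai)
  have "vec.span (insert ?b ?K) = UNIV"
  proof -
    { fix x :: "bit^'n"
      have "dotp a (x - dotp a x *s ?b) = 0"
        unfolding bitvec_diff dotp_add dotp_scale dotp_axis ai by simp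
      then have "x \<in> vec.span (insert ?b ?K)" unfolding vec.span_insert spK by blast }
    then show ?thesis by blast
  qed
  then have "vec.dim (insert ?b ?K) = CARD('n)"
    using vec.dim_span[of "insert ?b ?K"] vec_dimension[where 'n='n] by simp
  moreover have "vec.dim (insert ?b ?K) = vec.dim ?K + 1" using nb vec.dim_insert[of ?b ?K] by (simp only: if_False)
  ultimately show ?thesis by linarith
qed

lemma hyperplane_kernel:
  fixes U :: "(bit^'n::finite) set"
  assumes U: "vec.subspace U" and d: "vec.dim U = CARD('n) - 1"
  shows "\<exists>a. a \<noteq> 0 \<and> U = {x. dotp a x = 0}"
proof -
  have spU: "vec.span U = U" by (rule vec.span_eq_iff[THEN iffD2, OF U])
  have "CARD('n) > 0" by simp
  then have "vec.dim U \<noteq> vec.dim (UNIV :: (bit^'n) set)" using d vec_dimension[where 'n='n] by linarith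
  then have "U \<noteq> UNIV" by auto
  then obtain b where b: "b \<notin> U" by auto
  have nbU: "b \<notin> vec.span U" unfolding spU by (rule b)
  have "vec.dim (insert b U) = vec.dim U + 1" using nbU vec.dim_insert[of b U] by (simp only: if_False)
  then have "vec.dim (insert b U) = CARD('n)" using d \<open>CARD('n) > 0\<close> by linarith
  then have "vec.span (insert b U) = UNIV"
    using vec.dim_eq_full vec_dimension vec.dimension_def by (metis vec.dim_UNIV)
  then have cov: "x \<in> U \<or> x + b \<in> U" for x
  proof -
    assume "vec.span (insert b U) = UNIV"
    then obtain k where k: "x - k *s b \<in> U" unfolding vec.span_insert spU by auto
    then show ?thesis using bit_cases2[of k] by (auto simp: bitvec_diff)
  qed
  define f where "f x = (if x \<in> U then 0 else (1::bit))" for x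
  have f0: "f 0 = 0" using U by (simp add: f_def vec.subspace_0)
  have fadd: "f (x + y) = f x + f y" for x y
  proof -
    have addU: "u \<in> U \<Longrightarrow> v \<in> U \<Longrightarrow> u + v \<in> U" for u v using U vec.subspace_add by blast
    have "x + y = (x + b) + (y + b)" by (simp add: vec_eq_iff)
    show ?thesis
    proof (cases "x \<in> U"; cases "y \<in> U")
      assume "x \<in> U" "y \<in> U" then show ?thesis by (simp add: f_def addU)
    next
      assume x: "x \<in> U" and y: "y \<notin> U"
      have "x + y \<notin> U"
      proof
        assume "x + y \<in> U" then have "x + (x + y) \<in> U" using addU x by blast
        then show False using y by (simp add: add.assoc[symmetric])
      qed
      then show ?thesis using x y by (simp add: f_def)
    next
      assume x: "x \<notin> U" and y: "y \<in> U"
      have "x + y \<notin> U"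
      proof
        assume "x + y \<in> U" then have "(x + y) + y \<in> U" using addU y by blast
        then show False using x by (simp add: add.assoc)
      qed
      then show ?thesis using x y by (simp add: f_def)
    next
      assume x: "x \<notin> U" and y: "y \<notin> U"
      then have "x + b \<in> U" "y + b \<in> U" using cov by auto
      then have "x + y \<in> U" using addU \<open>x + y = (x + b) + (y + b)\<close> by metis
      then show ?thesis using x y by (simp add: f_def)
    qed
  qed
  have fscale: "f (c *s x) = c * f x" for c x
    using bit_cases2[of c] f0 by (metis mult_1 mult_zero_left scaleR_one vector_smult_lzero vector_smult_lid)
  have fsum: "f (\<Sum>i\<in>S. g i) = (\<Sum>i\<in>S. f (g i))" if "finite S" for S g
    using that by (induction S rule: finite_induct) (auto simp: f0 fadd)
  define a where "a = (\<chi> i. f (axis i 1))"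
  have fu: "finite (UNIV :: 'n set)" by simp
  have fa: "f x = dotp a x" for x
  proof -
    have "f x = f (\<Sum>i\<in>UNIV. x $ i *s axis i 1)" by (simp only: basis_expansion)
    also have "\<dots> = (\<Sum>i\<in>UNIV. x $ i * f (axis i 1))" by (simp only: fsum[OF fu] fscale)
    also have "\<dots> = dotp a x" unfolding dotp_def a_def by (rule sum.cong) (auto simp: mult.commute)
    finally show ?thesis .
  qed
  have "a \<noteq> 0"
  proof
    assume "a = 0" then have "f b = 0" using fa by (simp add: dotp_def)
    then show False using b by (simp add: f_def)
  qed
  moreover have kU: "x \<in> U \<longleftrightarrow> dotp a x = 0" for x
    using fa[of x] unfolding f_def by (cases "x \<in> U") simp_all
  thm kU
  have "U = {x. dotp a x = 0}" using kU by blast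
  ultimately show ?thesis by (intro exI[of _ a] conjI)
qed

lemma Min_zero_iff:
  fixes g :: "'a \<Rightarrow> nat"
  assumes "finite S" "S \<noteq> {}"
  shows "Min (g ` S) = 0 \<longleftrightarrow> (\<exists>x\<in>S. g x = 0)"
proof
  assume "Min (g ` S) = 0"
  moreover have "Min (g ` S) \<in> g ` S" using assms by (intro Min_in) auto
  ultimately show "\<exists>x\<in>S. g x = 0" by auto
next
  assume "\<exists>x\<in>S. g x = 0"
  then obtain x where "x \<in> S" "g x = 0" by blast
  then have "Min (g ` S) \<le> 0" using assms by (metis Min_le finite_imageI image_eqI)
  then show "Min (g ` S) = 0" by simp
qed

lemma affine_nonempty: "affine_funs \<noteq> {}"
  unfolding affine_funs_def by blast

lemma nonlin_zero_iff:
  fixes f :: "'n::finite boolfun"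
  shows "nonlin f = 0 \<longleftrightarrow> (\<exists>c a. \<forall>x. f x = c + dotp a x)"
proof -
  have fin: "finite (affine_funs :: 'n boolfun set)" by (rule finite_subset[OF subset_UNIV]) simp
  have hd: "hdist f g = 0 \<longleftrightarrow> f = g" for g
  proof -
    have "finite {x. f x \<noteq> g x}" by simp
    then have "hdist f g = 0 \<longleftrightarrow> {x. f x \<noteq> g x} = {}" unfolding hdist_def by simp
    also have "\<dots> \<longleftrightarrow> f = g" by (auto simp: fun_eq_iff)
    finally show ?thesis .
  qed
  have "nonlin f = 0 \<longleftrightarrow> (\<exists>g\<in>affine_funs. f = g)"
    unfolding nonlin_def using Min_zero_iff[OF fin affine_nonempty, of "hdist f"] hd by simp
  also have "\<dots> \<longleftrightarrow> (\<exists>c a. \<forall>x. f x = c + dotp a x)"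
  proof -
    have "affine_funs = {(\<lambda>x. c + dotp a x) | c a. True}"
      unfolding affine_funs_def dotp_def by (rule refl)
    then have "(\<exists>g\<in>affine_funs. f = g) \<longleftrightarrow> (\<exists>c a. f = (\<lambda>x. c + dotp a x))" by blast
    then show ?thesis by (simp only: fun_eq_iff)
  qed
  finally show ?thesis .
qed

lemma vnonlin_zero_iff:
  fixes F :: "'n::finite vecfun"
  shows "vnonlin F = 0 \<longleftrightarrow> (\<exists>v. v \<noteq> 0 \<and> (\<exists>c a. \<forall>x. dotp v (F x) = c + dotp a x))"
proof -
  obtain i :: 'n where True by blast
  have "axis i (1::bit) \<noteq> 0" by (simp add: axis_def vec_eq_iff)
  then have ne: "UNIV - {0::bit^'n} \<noteq> {}" by blast
  have fin: "finite (UNIV - {0::bit^'n})" by simp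
  have comp: "component v F = (\<lambda>x. dotp v (F x))" for v
    unfolding component_def dotp_def by simp
  show ?thesis
    unfolding vnonlin_def Min_zero_iff[OF fin ne] nonlin_zero_iff comp by auto
qed

lemma dotp_nonzero_exists:
  fixes v :: "bit^'n::finite"
  assumes "v \<noteq> 0"
  shows "\<exists>y. dotp v y \<noteq> 0"
proof -
  obtain i where "v $ i \<noteq> 0" using assms by (auto simp: vec_eq_iff)
  then show ?thesis using dotp_axis[of v i] by metis
qed

lemma bit_eq_by_zero: "((x::bit) = 0 \<longleftrightarrow> y = 0) \<Longrightarrow> x = y"
  using bit_cases2[of x] bit_cases2[of y] by auto

theorem proposition5p3:
  fixes \<gamma> :: "bit ^ 'n::finite \<Rightarrow> bit ^ 'n"
  assumes "CARD('n) > 1"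
    and "bij \<gamma>"
    and "\<gamma> 0 = 0"
  shows "vnonlin \<gamma> \<noteq> 0 \<longleftrightarrow> strongly_1_anti_invariant \<gamma>"
proof -
  have inj: "inj \<gamma>" and surj: "surj \<gamma>" using assms(2) bij_is_inj bij_is_surj by auto
  have "vnonlin \<gamma> = 0 \<longleftrightarrow> \<not> strongly_1_anti_invariant \<gamma>"
  proof
    assume "vnonlin \<gamma> = 0"
    then obtain v c a where v: "v \<noteq> 0" and eq: "\<And>x. dotp v (\<gamma> x) = c + dotp a x"
      unfolding vnonlin_zero_iff by blast
    have "c = 0" using eq[of 0] assms(3) by simp
    then have eq0: "dotp v (\<gamma> x) = dotp a x" for x using eq[of x] by simp
    have a: "a \<noteq> 0"
    proof
      assume "a = 0"
      then have "dotp v (\<gamma> x) = 0" for x using eq0[of x] by (simp add: dotp_def)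
      then have "dotp v y = 0" for y using surj by (metis surjD)
      then show False using dotp_nonzero_exists[OF v] by blast
    qed
    let ?U = "{x. dotp a x = 0}" and ?W = "{y. dotp v y = 0}"
    have img: "\<gamma> ` ?U = ?W"
    proof
      show "\<gamma> ` ?U \<subseteq> ?W" using eq0 by auto
      show "?W \<subseteq> \<gamma> ` ?U"
      proof
        fix y assume "y \<in> ?W"
        obtain x where "y = \<gamma> x" using surj by (metis surjD)
        then show "y \<in> \<gamma> ` ?U" using \<open>y \<in> ?W\<close> eq0[of x] by auto
      qed
    qed
    obtain y where "dotp a y \<noteq> 0" using dotp_nonzero_exists[OF a] by blast
    then have "?U \<noteq> UNIV" by blast
    moreover have "vec.dim ?U = CARD('n) - 1" "vec.dim ?W = CARD('n) - 1"
      using kernel_dim a v by auto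
    ultimately show "\<not> strongly_1_anti_invariant \<gamma>"
      unfolding strongly_1_anti_invariant_def using img kernel_subspace[of a] kernel_subspace[of v]
      by (metis less_irrefl)
  next
    assume "\<not> strongly_1_anti_invariant \<gamma>"
    then obtain U W where U: "vec.subspace U" and W: "vec.subspace W" and img: "\<gamma> ` U = W"
      and n1: "\<not> (vec.dim U = vec.dim W \<and> vec.dim W < CARD('n) - 1)"
      and n2: "\<not> (U = UNIV \<and> W = UNIV)"
      unfolding strongly_1_anti_invariant_def by blast
    have cUW: "card W = card U" using img card_image inj by (metis inj_on_subset subset_UNIV)
    then have "(2::nat) ^ vec.dim U = 2 ^ vec.dim W"
      using card_subspace[OF U] card_subspace[OF W] by simp
    then have dUW: "vec.dim U = vec.dim W" by simp
    have dle: "vec.dim W \<le> CARD('n)"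
      using vec.dim_subset_UNIV[of W] unfolding vec.dimension_def by (simp add: card_cart_basis)
    have "vec.dim W \<noteq> CARD('n)"
    proof
      assume "vec.dim W = CARD('n)"
      then have "vec.span W = UNIV"
        using vec.dim_eq_full[of W] unfolding vec.dimension_def by (simp add: card_cart_basis)
      moreover have "vec.span W = W" by (rule vec.span_eq_iff[THEN iffD2, OF W])
      ultimately have WU: "W = UNIV" by simp
      then have "card U = card (UNIV :: (bit^'n) set)" using cUW by simp
      then have "U = UNIV" by (metis card_subset_eq finite subset_UNIV)
      then show False using n2 WU by blast
    qed
    then have dW: "vec.dim W = CARD('n) - 1" and dU: "vec.dim U = CARD('n) - 1"
      using dle n1 dUW by auto
    obtain a where a: "a \<noteq> 0" and Ua: "U = {x. dotp a x = 0}" using hyperplane_kernel[OF U dU] by blast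
    obtain v where v: "v \<noteq> 0" and Wv: "W = {x. dotp v x = 0}" using hyperplane_kernel[OF W dW] by blast
    have "dotp v (\<gamma> x) = 0 + dotp a x" for x
    proof -
      have "dotp v (\<gamma> x) = 0 \<longleftrightarrow> \<gamma> x \<in> W" using Wv by simp
      also have "\<dots> \<longleftrightarrow> x \<in> U" using img inj_image_mem_iff[OF inj] by blast
      also have "\<dots> \<longleftrightarrow> dotp a x = 0" using Ua by simp
      finally show ?thesis by (simp add: bit_eq_by_zero)
    qed
    then show "vnonlin \<gamma> = 0" unfolding vnonlin_zero_iff using v by blast
  qed
  then show ?thesis by (simp only: not_not[symmetric]) (metis)
qed

end
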